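(* Let $X$ be a real Banach space with $\dim X\ge 2$. Then $S_P(X)\ge \tfrac12\left(C'_{NJ}(X)-1\right)$.
   Context: For a real Banach space $X$ with unit sphere $S_X$, the P-angle constant is $S_P(X)=\sup\left\{\frac{\|x+y\|^2+\|x-y\|^2-4}{2\|x+y\|\,\|x-y\|}: x,y\in S_X,\ x\neq \pm y\right\}$. The modified von Neumann–Jordan constant is $C'_{NJ}(X)=\sup\left\{\frac{\|x+y\|^2+\|x-y\|^2}{4}: x,y\in S_X\right\}$. *)

theory Defs
  imports "HOL-Analysis.Analysis"
begin

definition P_angle_const :: "'a::real_normed_vector itself \<Rightarrow> real" where
  "P_angle_const _ = Sup {(norm (x + y) ^ 2 + norm (x - y) ^ 2 - 4) / (2 * norm (x + y) * norm (x - y)) | x y :: 'a.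
      norm x = 1 \<and> norm y = 1 \<and> x \<noteq> y \<and> x \<noteq> - y}"

definition mod_NJ_const :: "'a::real_normed_vector itself \<Rightarrow> real" where
  "mod_NJ_const _ = Sup {(norm (x + y) ^ 2 + norm (x - y) ^ 2) / 4 | x y :: 'a.
      norm x = 1 \<and> norm y = 1}"

end

theory Submission
  imports Defs
begin

lemma indep2:
  fixes u v :: "'a::real_vector"
  assumes "u \<noteq> v" "independent {u, v}" "a *\<^sub>R u + b *\<^sub>R v = 0"
  shows "a = 0 \<and> b = 0"
proof (rule ccontr)
  assume H: "\<not> (a = 0 \<and> b = 0)"
  show False
  proof (cases "a = 0")
    case True
    then have "b \<noteq> 0" using H by auto
    then have "v = 0" using assms(3) True by auto
    then have "v \<in> span ({u,v} - {v})" by (simp add: span_zero)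
    then show False using assms(2) by (meson dependent_def insertCI)
  next
    case False
    then have "u = (- b / a) *\<^sub>R v" using assms(3)
      by (metis (no_types, lifting) add.commute add_uminus_conv_diff divide_inverse_commute
          eq_neg_iff_add_eq_0 eq_vector_fraction_iff scaleR_minus_left)
    moreover have "v \<in> span ({u,v} - {u})" using assms(1) by (simp add: span_base)
    ultimately have "u \<in> span ({u,v} - {u})" by (metis span_scale)
    then show False using assms(2) by (meson dependent_def insertCI)
  qed
qed

lemma exists_eq_pair:
  fixes u v :: "'a::real_normed_vector"
  assumes "u \<noteq> v" "independent {u, v}"
  shows "\<exists>x y :: 'a. norm x = 1 \<and> norm y = 1 \<and> norm (x + y) = norm (x - y)"
proof -
  have u0: "u \<noteq> 0" using assms(2) dependent_zero by blast
  define x where "x = u /\<^sub>R norm u"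
  have nx: "norm x = 1" using u0 by (simp add: x_def)
  define z where "z = (\<lambda>t::real. (1 - 2*t) *\<^sub>R x + (t - t*t) *\<^sub>R v)"
  have z0: "z t \<noteq> 0" for t
  proof
    assume "z t = 0"
    then have "((1 - 2*t) / norm u) *\<^sub>R u + (t - t*t) *\<^sub>R v = 0"
      by (simp add: z_def x_def divide_inverse_commute mult.commute)
    from indep2[OF assms this] have "1 - 2*t = 0" "t - t*t = 0" using u0 by auto
    then show False by auto
  qed
  define y where "y = (\<lambda>t. z t /\<^sub>R norm (z t))"
  define g where "g = (\<lambda>t. norm (x + y t) - norm (x - y t))"
  have cz: "continuous_on {0..1} z" unfolding z_def by (intro continuous_intros)
  have cy: "continuous_on {0..1} y" unfolding y_def
    by (intro continuous_intros cz) (use z0 in auto)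
  have cg: "continuous_on {0..1} g" unfolding g_def by (intro continuous_intros cy)
  have "y 0 = x" using nx by (simp add: y_def z_def)
  moreover have "x + x = 2 *\<^sub>R x" by (simp add: scaleR_2)
  ultimately have g0: "g 0 = 2" using nx by (simp add: g_def)
  have "y 1 = - x" using nx by (simp add: y_def z_def)
  moreover have "x + x = 2 *\<^sub>R x" by (simp add: scaleR_2)
  ultimately have g1: "g 1 = -2" using nx by (simp add: g_def)
  obtain t where "0 \<le> t" "t \<le> 1" "g t = 0"
    using IVT2'[of g 1 0 0] cg g0 g1 by auto
  moreover have "norm (y t) = 1" using z0 by (simp add: y_def)
  ultimately have "norm (x + y t) = norm (x - y t)" "norm (y t) = 1" unfolding g_def by auto
  then show ?thesis using nx by (intro exI[of _ x] exI[of _ "y t"]) auto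
qed

definition rat :: "'a::real_normed_vector \<Rightarrow> 'a \<Rightarrow> real" where
  "rat x y = (norm (x + y) ^ 2 + norm (x - y) ^ 2 - 4) / (2 * norm (x + y) * norm (x - y))"

lemma P_eq: "P_angle_const TYPE('a::real_normed_vector) =
   Sup {rat x y | x y :: 'a. norm x = 1 \<and> norm y = 1 \<and> x \<noteq> y \<and> x \<noteq> - y}"
  unfolding P_angle_const_def rat_def by simp

lemma rat_le1:
  fixes x y :: "'a::real_normed_vector"
  assumes "norm x = 1" "norm y = 1" "x \<noteq> y" "x \<noteq> - y"
  shows "rat x y \<le> 1"
proof -
  define a where "a = norm (x + y)"
  define b where "b = norm (x - y)"
  have a0: "a > 0" using assms(4) unfolding a_def
    by (auto simp: add_eq_0_iff)
  have b0: "b > 0" using assms(3) unfolding b_def by simp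
  have "(x + y) - (x - y) = 2 *\<^sub>R y" by (simp add: scaleR_2)
  then have "norm ((x + y) - (x - y)) = 2" using assms(2) by simp
  then have "\<bar>a - b\<bar> \<le> 2" unfolding a_def b_def
    by (metis norm_triangle_ineq3)
  then have "(a - b)^2 \<le> 2^2" by (metis abs_le_square_iff abs_numeral)
  then have "a^2 + b^2 - 4 \<le> 2*a*b" by (simp add: power2_diff)
  then have "(a^2 + b^2 - 4) / (2*a*b) \<le> 1" using a0 b0 by (simp add: divide_le_eq)
  then show ?thesis unfolding rat_def a_def b_def .
qed

lemma bdd_P: "bdd_above {rat x y | x y :: 'a::real_normed_vector. norm x = 1 \<and> norm y = 1 \<and> x \<noteq> y \<and> x \<noteq> - y}"
  by (rule bdd_aboveI[of _ 1]) (auto intro: rat_le1)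

lemma P_upper:
  fixes x y :: "'a::real_normed_vector"
  assumes "norm x = 1" "norm y = 1" "x \<noteq> y" "x \<noteq> - y"
  shows "rat x y \<le> P_angle_const TYPE('a)"
  unfolding P_eq by (rule cSup_upper[OF _ bdd_P]) (use assms in blast)

lemma P_nonneg:
  fixes u v :: "'a::real_normed_vector"
  assumes "u \<noteq> v" "independent {u, v}"
  shows "0 \<le> P_angle_const TYPE('a)"
proof -
  obtain x y :: 'a where nx: "norm x = 1" and ny: "norm y = 1" and ab: "norm (x + y) = norm (x - y)"
    using exists_eq_pair[OF assms] by blast
  define a where "a = norm (x + y)"
  have a0: "a > 0"
  proof (rule ccontr)
    assume "\<not> a > 0"
    then have "x + y = 0" "x - y = 0" using ab unfolding a_def by auto
    moreover have "(x + y) + (x - y) = 2 *\<^sub>R x" by (simp add: scaleR_2)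
    ultimately have "x = 0" by simp
    then show False using nx by simp
  qed
  have xy1: "x \<noteq> y" using a0 ab unfolding a_def by auto
  have xy2: "x \<noteq> - y" using a0 unfolding a_def by auto
  show ?thesis
  proof (cases "a^2 \<ge> 2")
    case True
    have "0 \<le> rat x y" unfolding rat_def using True a0 ab unfolding a_def by auto
    then show ?thesis using P_upper[OF nx ny xy1 xy2] by linarith
  next
    case False
    define x' where "x' = (x + y) /\<^sub>R a"
    define y' where "y' = (x - y) /\<^sub>R a"
    have nx': "norm x' = 1" using a0 unfolding x'_def a_def by simp
    have ny': "norm y' = 1" using a0 ab unfolding y'_def a_def by simp
    have s1: "x' + y' = ((x + y) + (x - y)) /\<^sub>R a" unfolding x'_def y'_def
      by (simp only: scaleR_add_right)
    have s2: "(x + y) + (x - y) = 2 *\<^sub>R x" by (simp add: scaleR_2)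
    have s: "x' + y' = (2 / a) *\<^sub>R x" using s1 s2 by (simp add: divide_inverse_commute)
    have d1: "x' - y' = ((x + y) - (x - y)) /\<^sub>R a" unfolding x'_def y'_def
      by (simp only: scaleR_diff_right)
    have d2: "(x + y) - (x - y) = 2 *\<^sub>R y" by (simp add: scaleR_2)
    have d: "x' - y' = (2 / a) *\<^sub>R y" using d1 d2 by (simp add: divide_inverse_commute)
    have ns: "norm (x' + y') = 2 / a" using s nx a0 by simp
    have nd: "norm (x' - y') = 2 / a" using d ny a0 by simp
    have "x' \<noteq> y'" using nd a0 by auto
    moreover have "x' \<noteq> - y'" using ns a0 by auto
    moreover have "0 \<le> rat x' y'"
    proof -
      have "a^2 * 2 \<le> 4" using False by simp
      have "(2/a)^2 = 4 / a^2" by (simp add: power_divide)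
      moreover have "4 / a^2 \<ge> 2" using False a0 by (simp add: le_divide_eq)
      ultimately show ?thesis unfolding rat_def ns nd using a0 by auto
    qed
    ultimately show ?thesis using P_upper[OF nx' ny'] by fastforce
  qed
qed

lemma pair_bound:
  fixes x y :: "'a::real_normed_vector"
  assumes nx: "norm x = 1" and ny: "norm y = 1" and P0: "0 \<le> P_angle_const TYPE('a)"
  shows "(norm (x + y) ^ 2 + norm (x - y) ^ 2) / 4 \<le> 2 * P_angle_const TYPE('a) + 1"
proof -
  define a where "a = norm (x + y)"
  define b where "b = norm (x - y)"
  have a2: "a \<le> 2" unfolding a_def using norm_triangle_ineq[of x y] nx ny by simp
  have b2: "b \<le> 2" unfolding b_def using norm_triangle_ineq4[of x y] nx ny by simp
  show ?thesis
  proof (cases "x = y \<or> x = - y \<or> a^2 + b^2 \<le> 4")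
    case True
    have "a^2 + b^2 \<le> 4"
    proof -
      { assume "x = y"
        then have "x + y = 2 *\<^sub>R x" "x - y = 0" by (auto simp: scaleR_2)
        then have ?thesis unfolding a_def b_def using nx by simp }
      moreover
      { assume "x = - y"
        then have "x - y = 2 *\<^sub>R x" "x + y = 0" by (auto simp: scaleR_2)
        then have ?thesis unfolding a_def b_def using nx by simp }
      ultimately show ?thesis using True by blast
    qed
    then show ?thesis using P0 unfolding a_def b_def by simp
  next
    case False
    then have xy1: "x \<noteq> y" and xy2: "x \<noteq> - y" and N: "a^2 + b^2 - 4 > 0" by auto
    have a0: "a > 0" using xy2 unfolding a_def
      by (auto simp: add_eq_0_iff)
    have b0: "b > 0" using xy1 unfolding b_def by simp
    have ab: "2 * a * b \<le> 8" using a2 b2 a0 b0 mult_mono[of a 2 b 2] by simp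
    have "(a^2 + b^2 - 4) / 8 \<le> (a^2 + b^2 - 4) / (2 * a * b)"
      using N ab a0 b0 by (intro divide_left_mono) auto
    also have "\<dots> = rat x y" unfolding rat_def a_def b_def ..
    also have "\<dots> \<le> P_angle_const TYPE('a)" by (rule P_upper[OF nx ny xy1 xy2])
    finally show ?thesis unfolding a_def b_def by simp
  qed
qed

theorem theorem4p1:
  assumes "\<exists>u v :: 'a::banach. u \<noteq> v \<and> independent {u, v}"
  shows "P_angle_const TYPE('a) \<ge> (mod_NJ_const TYPE('a) - 1) / 2"
proof -
  obtain u v :: 'a where uv: "u \<noteq> v" "independent {u, v}" using assms by blast
  have P0: "0 \<le> P_angle_const TYPE('a)" by (rule P_nonneg[OF uv])
  have u0: "u \<noteq> 0" using uv(2) dependent_zero by blast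
  define e where "e = u /\<^sub>R norm u"
  have ne: "norm e = 1" using u0 by (simp add: e_def)
  have "mod_NJ_const TYPE('a) \<le> 2 * P_angle_const TYPE('a) + 1"
    unfolding mod_NJ_const_def
  proof (rule cSup_least)
    show "{(norm (x + y) ^ 2 + norm (x - y) ^ 2) / 4 | x y :: 'a. norm x = 1 \<and> norm y = 1} \<noteq> {}"
      using ne by blast
  next
    fix w assume "w \<in> {(norm (x + y) ^ 2 + norm (x - y) ^ 2) / 4 | x y :: 'a. norm x = 1 \<and> norm y = 1}"
    then show "w \<le> 2 * P_angle_const TYPE('a) + 1" using pair_bound[OF _ _ P0] by blast
  qed
  then show ?thesis by simp
qed

end
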